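(* Let $\boldsymbol X \in \mathbb{R}^{n\times d}$, $\boldsymbol y \in \mathbb{R}^n$, $\boldsymbol M = \boldsymbol X^\top \boldsymbol X$, $\boldsymbol r = \boldsymbol X^\top \boldsymbol y$. Assume (A1) $\boldsymbol r > \mathbf 0$ and (A2) $M_{ij}\le 0$ for all $i\neq j$. Consider the ODE $$\frac{\mathrm d \theta_i}{\mathrm d t} = \theta_i\Big(r_i - \sum_{j=1}^d M_{ij}\theta_j\Big),\quad i=1,\dots,d.$$ For every $I\subset\{1,\dots,d\}$, the matrix $\boldsymbol M_{II}$ is invertible and there exists a unique fixed point $\boldsymbol\theta\ge\mathbf 0$ of this ODE whose support $\{i:\theta_i>0\}$ equals $I$; it is given by $\boldsymbol\theta_I = (\boldsymbol M_{II})^{-1}\boldsymbol r_I$ and $\boldsymbol\theta_{I^c}=\mathbf 0$. There are thus $2^d$ fixed points of the ODE.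
   Context: Vector inequalities are coordinatewise. For $I\subset\{1,\dots,d\}$, $I^c$ is its complement, $\boldsymbol\theta_I$ is the subvector of coordinates in $I$, and $\boldsymbol M_{II}$ is the principal submatrix with rows and columns indexed by $I$. *)

theory Defs
  imports "Jordan_Normal_Form.DL_Submatrix" "Jordan_Normal_Form.Gauss_Jordan_Elimination"
begin

text \<open>Indices are 0-based: coordinates of vectors in R^d are 0..<d.\<close>

definition vec_restr :: "'a vec \<Rightarrow> nat set \<Rightarrow> 'a vec" where
  "vec_restr v I = vec (card {i. i < dim_vec v \<and> i \<in> I}) (\<lambda>k. v $ pick I k)"

definition ode_field :: "nat \<Rightarrow> real mat \<Rightarrow> real vec \<Rightarrow> real vec \<Rightarrow> real vec" where
  "ode_field d M r \<theta> = vec d (\<lambda>i. \<theta> $ i * (r $ i - (\<Sum>j<d. M $$ (i, j) * \<theta> $ j)))"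

definition is_fixed_point :: "nat \<Rightarrow> real mat \<Rightarrow> real vec \<Rightarrow> real vec \<Rightarrow> bool" where
  "is_fixed_point d M r \<theta> \<longleftrightarrow> \<theta> \<in> carrier_vec d \<and> ode_field d M r \<theta> = 0\<^sub>v d"

definition nonneg_vec :: "nat \<Rightarrow> real vec \<Rightarrow> bool" where
  "nonneg_vec d \<theta> \<longleftrightarrow> (\<forall>i<d. \<theta> $ i \<ge> 0)"

definition supp_vec :: "nat \<Rightarrow> real vec \<Rightarrow> nat set" where
  "supp_vec d \<theta> = {i. i < d \<and> \<theta> $ i > 0}"

end

theory Submission
  imports Defs "Jordan_Normal_Form.Determinant"
begin

definition idx :: "nat set \<Rightarrow> nat \<Rightarrow> nat" where
  "idx I i = card {a\<in>I. a < i}"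

lemma pick_in: "finite I \<Longrightarrow> k < card I \<Longrightarrow> pick I k \<in> I"
  by (rule pick_in_set_le)

lemma idx_pick: "finite I \<Longrightarrow> k < card I \<Longrightarrow> idx I (pick I k) = k"
  unfolding idx_def by (rule card_pick_le)

lemma pick_idx: "i \<in> I \<Longrightarrow> pick I (idx I i) = i"
  unfolding idx_def by (rule pick_card_in_set)

lemma idx_lt: assumes "finite I" "i \<in> I" shows "idx I i < card I"
proof -
  have "{a\<in>I. a < i} \<subset> I" using assms by auto
  thus ?thesis unfolding idx_def using assms(1) by (simp add: psubset_card_mono)
qed

lemma pick_bij: "finite I \<Longrightarrow> bij_betw (pick I) {..<card I} I"
  by (rule bij_betw_byWitness[where f'="idx I"]) (auto simp: idx_pick pick_idx idx_lt pick_in)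

lemma sum_pick: "finite I \<Longrightarrow> sum g I = (\<Sum>k<card I. g (pick I k))"
  using sum.reindex_bij_betw[OF pick_bij, of I g] by simp


locale setting =
  fixes X :: "real mat" and y :: "real vec" and n d :: nat
    and M :: "real mat" and r :: "real vec"
  assumes X: "X \<in> carrier_mat n d" and y: "y \<in> carrier_vec n"
    and M_def: "M = transpose_mat X * X" and r_def: "r = transpose_mat X *\<^sub>v y"
    and A1: "\<forall>i<d. r $ i > 0"
    and A2: "\<forall>i<d. \<forall>j<d. i \<noteq> j \<longrightarrow> M $$ (i, j) \<le> 0"
begin

lemma Mdim: "M \<in> carrier_mat d d" using X M_def by auto
lemma rdim: "r \<in> carrier_vec d" using X unfolding r_def by (intro carrier_vecI) simp

lemma M_ent: "i < d \<Longrightarrow> j < d \<Longrightarrow> M $$ (i,j) = (\<Sum>k<n. X $$ (k,i) * X $$ (k,j))"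
  using X unfolding M_def
  by (auto simp: scalar_prod_def lessThan_atLeast0 intro!: sum.cong)

lemma r_ent: "i < d \<Longrightarrow> r $ i = (\<Sum>k<n. X $$ (k,i) * y $ k)"
  using X y unfolding r_def
  by (auto simp: scalar_prod_def lessThan_atLeast0 intro!: sum.cong)

lemma Q: assumes "I \<subseteq> {..<d}"
  shows "(\<Sum>i\<in>I. \<Sum>j\<in>I. f i * M $$ (i,j) * f j) = (\<Sum>k<n. (\<Sum>i\<in>I. X $$ (k,i) * f i)^2)"
proof -
  have "(\<Sum>k<n. (\<Sum>i\<in>I. X $$ (k,i) * f i)^2) = (\<Sum>k<n. \<Sum>i\<in>I. \<Sum>j\<in>I. (X $$ (k,i) * f i) * (X $$ (k,j) * f j))"
    by (simp add: power2_eq_square sum_product)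
  also have "\<dots> = (\<Sum>i\<in>I. \<Sum>k<n. \<Sum>j\<in>I. (X $$ (k,i) * f i) * (X $$ (k,j) * f j))"
    by (rule sum.swap)
  also have "\<dots> = (\<Sum>i\<in>I. \<Sum>j\<in>I. \<Sum>k<n. (X $$ (k,i) * f i) * (X $$ (k,j) * f j))"
    by (rule sum.cong[OF refl], rule sum.swap)
  also have "\<dots> = (\<Sum>i\<in>I. \<Sum>j\<in>I. f i * M $$ (i,j) * f j)"
  proof (intro sum.cong refl)
    fix i j assume "i \<in> I" "j \<in> I"
    hence "i < d" "j < d" using assms by auto
    thus "(\<Sum>k<n. (X $$ (k,i) * f i) * (X $$ (k,j) * f j)) = f i * M $$ (i,j) * f j"
    proof -
      have "f i * M $$ (i,j) * f j = (\<Sum>k<n. f i * (X $$ (k,i) * X $$ (k,j)) * f j)"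
        using M_ent[OF \<open>i<d\<close> \<open>j<d\<close>] by (simp add: sum_distrib_left sum_distrib_right)
      also have "\<dots> = (\<Sum>k<n. (X $$ (k,i) * f i) * (X $$ (k,j) * f j))"
        by (rule sum.cong) (simp_all add: algebra_simps)
      finally show ?thesis by simp
    qed
  qed
  finally show ?thesis by simp
qed

lemma Q_nonneg: assumes "I \<subseteq> {..<d}"
  shows "(\<Sum>i\<in>I. \<Sum>j\<in>I. f i * M $$ (i,j) * f j) \<ge> 0"
  unfolding Q[OF assms] by (auto intro: sum_nonneg)

lemma inj_core: assumes I: "I \<subseteq> {..<d}" and h: "\<forall>i\<in>I. (\<Sum>j\<in>I. M $$ (i,j) * f j) = 0"
  and i: "i \<in> I" shows "f i = 0"
proof -
  have fin: "finite I" using I finite_subset by blast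
  have "(\<Sum>i\<in>I. \<Sum>j\<in>I. f i * M $$ (i,j) * f j) = (\<Sum>i\<in>I. f i * (\<Sum>j\<in>I. M $$ (i,j) * f j))"
    by (simp add: sum_distrib_left mult_ac)
  also have "\<dots> = 0" using h by simp
  finally have Qf: "(\<Sum>i\<in>I. \<Sum>j\<in>I. f i * M $$ (i,j) * f j) = 0" .
  define g where "g = (\<lambda>i. \<bar>f i\<bar>)"
  have le: "(\<Sum>i\<in>I. \<Sum>j\<in>I. g i * M $$ (i,j) * g j) \<le> (\<Sum>i\<in>I. \<Sum>j\<in>I. f i * M $$ (i,j) * f j)"
  proof (intro sum_mono)
    fix a b assume a: "a \<in> I" and b: "b \<in> I"
    show "g a * M $$ (a,b) * g b \<le> f a * M $$ (a,b) * f b"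
    proof (cases "a = b")
      case True thus ?thesis by (simp add: g_def abs_mult_self_eq mult_ac)
    next
      case False
      hence "M $$ (a,b) \<le> 0" using A2 a b I by auto
      moreover have "f a * f b \<le> g a * g b" unfolding g_def abs_mult[symmetric] by (rule abs_ge_self)
      ultimately have "M $$ (a,b) * (g a * g b) \<le> M $$ (a,b) * (f a * f b)"
        by (simp add: mult_left_mono_neg)
      thus ?thesis by (simp add: mult_ac)
    qed
  qed
  have "(\<Sum>k<n. (\<Sum>i\<in>I. X $$ (k,i) * g i)^2) = 0"
    using le Qf Q_nonneg[OF I, of g] Q[OF I, of g] by simp
  hence Xg: "\<forall>k<n. (\<Sum>i\<in>I. X $$ (k,i) * g i) = 0"
    using sum_nonneg_eq_0_iff[of "{..<n}" "\<lambda>k. (\<Sum>i\<in>I. X $$ (k,i) * g i)^2"] by auto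
  have "(\<Sum>i\<in>I. g i * r $ i) = (\<Sum>i\<in>I. \<Sum>k<n. g i * (X $$ (k,i) * y $ k))"
    using I by (auto simp: r_ent sum_distrib_left intro!: sum.cong)
  also have "\<dots> = (\<Sum>k<n. \<Sum>i\<in>I. g i * (X $$ (k,i) * y $ k))" by (rule sum.swap)
  also have "\<dots> = (\<Sum>k<n. y $ k * (\<Sum>i\<in>I. X $$ (k,i) * g i))"
    by (auto simp: sum_distrib_left mult_ac intro!: sum.cong)
  also have "\<dots> = 0" using Xg by simp
  finally have "(\<Sum>i\<in>I. g i * r $ i) = 0" .
  moreover have "\<forall>i\<in>I. g i * r $ i \<ge> 0" using A1 I unfolding g_def by auto
  ultimately have "\<forall>i\<in>I. g i * r $ i = 0" using sum_nonneg_eq_0_iff[OF fin, of "\<lambda>i. g i * r $ i"] by simp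
  hence "\<bar>f i\<bar> * r $ i = 0" using i unfolding g_def by blast
  moreover have "r $ i > 0" using A1 I i by auto
  ultimately show ?thesis by simp
qed


lemma pos_core: assumes I: "I \<subseteq> {..<d}" and h: "\<forall>i\<in>I. (\<Sum>j\<in>I. M $$ (i,j) * w j) = r $ i"
  and i: "i \<in> I" shows "w i > 0"
proof -
  have fin: "finite I" using I finite_subset by blast
  define u where "u = (\<lambda>j. max (- w j) 0)"
  define p where "p = (\<lambda>j. max (w j) 0)"
  have wpu: "\<And>j. w j = p j - u j" unfolding u_def p_def by auto
  have "(\<Sum>i\<in>I. u i * r $ i) = (\<Sum>i\<in>I. u i * (\<Sum>j\<in>I. M $$ (i,j) * w j))"
    using h by simp
  also have "\<dots> = (\<Sum>i\<in>I. (\<Sum>j\<in>I. u i * M $$ (i,j) * p j) - (\<Sum>j\<in>I. u i * M $$ (i,j) * u j))"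
  proof (rule sum.cong[OF refl])
    fix i
    have "u i * (\<Sum>j\<in>I. M $$ (i,j) * w j) = (\<Sum>j\<in>I. u i * (M $$ (i,j) * w j))"
      by (rule sum_distrib_left)
    also have "\<dots> = (\<Sum>j\<in>I. u i * M $$ (i,j) * p j - u i * M $$ (i,j) * u j)"
      by (rule sum.cong[OF refl]) (simp only: wpu[of "_"] right_diff_distrib mult.assoc)
    also have "\<dots> = (\<Sum>j\<in>I. u i * M $$ (i,j) * p j) - (\<Sum>j\<in>I. u i * M $$ (i,j) * u j)"
      by (rule sum_subtractf)
    finally show "u i * (\<Sum>j\<in>I. M $$ (i,j) * w j) = (\<Sum>j\<in>I. u i * M $$ (i,j) * p j) - (\<Sum>j\<in>I. u i * M $$ (i,j) * u j)" .
  qed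
  also have "\<dots> = (\<Sum>i\<in>I. \<Sum>j\<in>I. u i * M $$ (i,j) * p j) - (\<Sum>i\<in>I. \<Sum>j\<in>I. u i * M $$ (i,j) * u j)"
    by (rule sum_subtractf)
  also have "\<dots> \<le> 0"
  proof -
    have "(\<Sum>i\<in>I. \<Sum>j\<in>I. u i * M $$ (i,j) * p j) \<le> 0"
    proof (intro sum_nonpos)
      fix a b assume a: "a \<in> I" and b: "b \<in> I"
      show "u a * M $$ (a,b) * p b \<le> 0"
      proof (cases "a = b")
        case True
        have e1: "u b * p b = 0" unfolding u_def p_def by auto
        have e2: "u b * M $$ (b,b) * p b = M $$ (b,b) * (u b * p b)" by (simp only: mult_ac)
        have "u b * M $$ (b,b) * p b = 0" unfolding e2 e1 by (rule mult_zero_right)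
        thus ?thesis unfolding True by (rule eq_refl)
      next
        case False
        hence "M $$ (a,b) \<le> 0" using A2 a b I by auto
        moreover have "u a * p b \<ge> 0" unfolding u_def p_def by auto
        ultimately have "M $$ (a,b) * (u a * p b) \<le> 0" by (simp add: mult_nonpos_nonneg)
        thus ?thesis by (simp add: mult_ac)
      qed
    qed
    thus ?thesis using Q_nonneg[OF I, of u] by linarith
  qed
  finally have le0: "(\<Sum>i\<in>I. u i * r $ i) \<le> 0" .
  have nn: "\<forall>i\<in>I. u i * r $ i \<ge> 0" using A1 I unfolding u_def by auto
  have "0 \<le> (\<Sum>i\<in>I. u i * r $ i)" using nn by (intro sum_nonneg) auto
  hence "(\<Sum>i\<in>I. u i * r $ i) = 0" using le0 by linarith
  hence z: "\<forall>i\<in>I. u i * r $ i = 0" using sum_nonneg_eq_0_iff[OF fin, of "\<lambda>i. u i * r $ i"] nn by simp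
  have wnn: "\<forall>j\<in>I. w j \<ge> 0"
  proof
    fix j assume j: "j \<in> I"
    have "r $ j > 0" using A1 I j by auto
    hence "u j = 0" using z j by auto
    thus "w j \<ge> 0" unfolding u_def by auto
  qed
  show ?thesis
  proof (rule ccontr)
    assume "\<not> w i > 0"
    hence wi: "w i = 0" using wnn i by force
    have "r $ i = (\<Sum>j\<in>I. M $$ (i,j) * w j)" using h i by simp
    also have "\<dots> = M $$ (i,i) * w i + (\<Sum>j\<in>I - {i}. M $$ (i,j) * w j)"
      using fin i by (simp add: sum.remove)
    also have "\<dots> \<le> 0" unfolding wi
    proof (simp, intro sum_nonpos)
      fix j assume "j \<in> I - {i}"
      hence "j \<in> I" "j \<noteq> i" by auto
      hence "M $$ (i,j) \<le> 0" "w j \<ge> 0" using A2 I i wnn by auto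
      thus "M $$ (i,j) * w j \<le> 0" by (simp add: mult_nonpos_nonneg)
    qed
    finally show False using A1 I i by force
  qed
qed

definition FP where "FP I \<theta> \<longleftrightarrow> is_fixed_point d M r \<theta> \<and> nonneg_vec d \<theta> \<and> supp_vec d \<theta> = I"

lemma sum_restr: assumes "I \<subseteq> {..<d}" "\<forall>j<d. j \<notin> I \<longrightarrow> \<theta> $ j = 0"
  shows "(\<Sum>j<d. M $$ (i,j) * \<theta> $ j) = (\<Sum>j\<in>I. M $$ (i,j) * \<theta> $ j)"
  by (rule sum.mono_neutral_right) (use assms in auto)

lemma FP_char: assumes I: "I \<subseteq> {..<d}"
  shows "FP I \<theta> \<longleftrightarrow> \<theta> \<in> carrier_vec d \<and> (\<forall>j<d. j \<notin> I \<longrightarrow> \<theta> $ j = 0) \<and> (\<forall>i\<in>I. \<theta> $ i > 0)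
     \<and> (\<forall>i\<in>I. (\<Sum>j\<in>I. M $$ (i,j) * \<theta> $ j) = r $ i)"
proof
  assume fp: "FP I \<theta>"
  hence c: "\<theta> \<in> carrier_vec d" and z: "ode_field d M r \<theta> = 0\<^sub>v d" and nn: "\<forall>i<d. \<theta> $ i \<ge> 0"
    and s: "{i. i < d \<and> \<theta> $ i > 0} = I"
    unfolding FP_def is_fixed_point_def nonneg_vec_def supp_vec_def by auto
  have off: "\<forall>j<d. j \<notin> I \<longrightarrow> \<theta> $ j = 0" using nn s by force
  have pos: "\<forall>i\<in>I. \<theta> $ i > 0" using s by auto
  have "\<forall>i\<in>I. (\<Sum>j\<in>I. M $$ (i,j) * \<theta> $ j) = r $ i"
  proof
    fix i assume i: "i \<in> I"
    hence id: "i < d" using I by auto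
    have "ode_field d M r \<theta> $ i = 0" using z id by simp
    hence "\<theta> $ i * (r $ i - (\<Sum>j<d. M $$ (i, j) * \<theta> $ j)) = 0" using id unfolding ode_field_def by simp
    moreover have "\<theta> $ i \<noteq> 0" using pos i by force
    ultimately have "r $ i = (\<Sum>j<d. M $$ (i, j) * \<theta> $ j)" by simp
    thus "(\<Sum>j\<in>I. M $$ (i,j) * \<theta> $ j) = r $ i" using sum_restr[OF I off] by simp
  qed
  thus "\<theta> \<in> carrier_vec d \<and> (\<forall>j<d. j \<notin> I \<longrightarrow> \<theta> $ j = 0) \<and> (\<forall>i\<in>I. \<theta> $ i > 0)
     \<and> (\<forall>i\<in>I. (\<Sum>j\<in>I. M $$ (i,j) * \<theta> $ j) = r $ i)" using c off pos by blast
next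
  assume h: "\<theta> \<in> carrier_vec d \<and> (\<forall>j<d. j \<notin> I \<longrightarrow> \<theta> $ j = 0) \<and> (\<forall>i\<in>I. \<theta> $ i > 0)
     \<and> (\<forall>i\<in>I. (\<Sum>j\<in>I. M $$ (i,j) * \<theta> $ j) = r $ i)"
  hence c: "\<theta> \<in> carrier_vec d" and off: "\<forall>j<d. j \<notin> I \<longrightarrow> \<theta> $ j = 0" and pos: "\<forall>i\<in>I. \<theta> $ i > 0"
    and eq: "\<forall>i\<in>I. (\<Sum>j\<in>I. M $$ (i,j) * \<theta> $ j) = r $ i" by auto
  have "ode_field d M r \<theta> = 0\<^sub>v d"
  proof (rule eq_vecI)
    fix i assume "i < dim_vec (0\<^sub>v d :: real vec)"
    hence id: "i < d" by simp
    show "ode_field d M r \<theta> $ i = 0\<^sub>v d $ i"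
    proof (cases "i \<in> I")
      case True
      thus ?thesis using id eq sum_restr[OF I off] unfolding ode_field_def by simp
    next
      case False
      thus ?thesis using id off unfolding ode_field_def by simp
    qed
  qed (simp add: ode_field_def)
  moreover have "nonneg_vec d \<theta>" unfolding nonneg_vec_def using off pos by (metis less_eq_real_def order_refl)
  moreover have "supp_vec d \<theta> = I" unfolding supp_vec_def using off pos I by force
  ultimately show "FP I \<theta>" using c unfolding FP_def is_fixed_point_def by blast
qed

lemma FP_unique: assumes I: "I \<subseteq> {..<d}" and "FP I \<theta>1" "FP I \<theta>2" shows "\<theta>1 = \<theta>2"
proof -
  note h1 = assms(2)[unfolded FP_char[OF I]] and h2 = assms(3)[unfolded FP_char[OF I]]
  define f where "f = (\<lambda>j. \<theta>1 $ j - \<theta>2 $ j)"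
  have "\<forall>i\<in>I. (\<Sum>j\<in>I. M $$ (i,j) * f j) = 0"
  proof
    fix i assume i: "i \<in> I"
    have "(\<Sum>j\<in>I. M $$ (i,j) * f j) = (\<Sum>j\<in>I. M $$ (i,j) * \<theta>1 $ j) - (\<Sum>j\<in>I. M $$ (i,j) * \<theta>2 $ j)"
      unfolding f_def by (simp add: right_diff_distrib sum_subtractf)
    thus "(\<Sum>j\<in>I. M $$ (i,j) * f j) = 0" using h1 h2 i by simp
  qed
  hence fz: "\<forall>i\<in>I. f i = 0" using inj_core[OF I] by blast
  show ?thesis
  proof (rule eq_vecI)
    have d1: "dim_vec \<theta>1 = d" using h1 by (meson carrier_vecD)
    have d2: "dim_vec \<theta>2 = d" using h2 by (meson carrier_vecD)
    show "dim_vec \<theta>1 = dim_vec \<theta>2" using d1 d2 by simp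
    fix i assume "i < dim_vec \<theta>2"
    hence "i < d" using d2 by simp
    show "\<theta>1 $ i = \<theta>2 $ i"
    proof (cases "i \<in> I")
      case True
      hence "f i = 0" using fz by blast
      thus ?thesis unfolding f_def by simp
    next
      case False
      have "\<theta>1 $ i = 0" using h1 False \<open>i < d\<close> by blast
      moreover have "\<theta>2 $ i = 0" using h2 False \<open>i < d\<close> by blast
      ultimately show ?thesis by simp
    qed
  qed
qed

lemma setI: "I \<subseteq> {..<d} \<Longrightarrow> {i. i < d \<and> i \<in> I} = I" by auto

lemma subm_carrier: "I \<subseteq> {..<d} \<Longrightarrow> submatrix M I I \<in> carrier_mat (card I) (card I)"
proof -
  assume I: "I \<subseteq> {..<d}"
  have dr: "dim_row M = d" and dc: "dim_col M = d" using Mdim by auto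
  have "dim_row (submatrix M I I) = card I" unfolding dim_submatrix(1) dr setI[OF I] ..
  moreover have "dim_col (submatrix M I I) = card I" unfolding dim_submatrix(2) dc setI[OF I] ..
  ultimately show ?thesis unfolding carrier_mat_def by simp
qed

lemma subm_mult: assumes I: "I \<subseteq> {..<d}" and v: "v \<in> carrier_vec (card I)" and a: "a < card I"
  shows "(submatrix M I I *\<^sub>v v) $ a = (\<Sum>k<card I. M $$ (pick I a, pick I k) * v $ k)"
proof -
  have c: "submatrix M I I \<in> carrier_mat (card I) (card I)" by (rule subm_carrier[OF I])
  have "(submatrix M I I *\<^sub>v v) $ a = (\<Sum>k<card I. submatrix M I I $$ (a, k) * v $ k)"
    using c v a by (simp add: scalar_prod_def lessThan_atLeast0)
  also have "\<dots> = (\<Sum>k<card I. M $$ (pick I a, pick I k) * v $ k)"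
    using Mdim a by (intro sum.cong refl) (simp add: submatrix_index setI[OF I])
  finally show ?thesis .
qed

lemma vec_restr_eq: assumes I: "I \<subseteq> {..<d}" and v: "v \<in> carrier_vec d"
  shows "vec_restr v I = vec (card I) (\<lambda>k. v $ pick I k)"
  using v unfolding vec_restr_def by (simp add: setI[OF I])

lemma subm_restr: assumes I: "I \<subseteq> {..<d}" and v: "v \<in> carrier_vec d" and a: "a < card I"
  shows "(submatrix M I I *\<^sub>v vec_restr v I) $ a = (\<Sum>j\<in>I. M $$ (pick I a, j) * v $ j)"
proof -
  have fin: "finite I" using I finite_subset by blast
  have vr: "vec_restr v I \<in> carrier_vec (card I)" unfolding vec_restr_eq[OF I v] by simp
  have "(submatrix M I I *\<^sub>v vec_restr v I) $ a = (\<Sum>k<card I. M $$ (pick I a, pick I k) * vec_restr v I $ k)"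
    by (rule subm_mult[OF I vr a])
  also have "\<dots> = (\<Sum>k<card I. M $$ (pick I a, pick I k) * v $ pick I k)"
    unfolding vec_restr_eq[OF I v] by (intro sum.cong refl) simp
  also have "\<dots> = (\<Sum>j\<in>I. M $$ (pick I a, j) * v $ j)"
    by (rule sum_pick[OF fin, symmetric])
  finally show ?thesis .
qed

lemma subm_inj: assumes I: "I \<subseteq> {..<d}" and v: "v \<in> carrier_vec (card I)"
  and z: "submatrix M I I *\<^sub>v v = 0\<^sub>v (card I)" shows "v = 0\<^sub>v (card I)"
proof -
  have fin: "finite I" using I finite_subset by blast
  define f where "f = (\<lambda>j. if j \<in> I then v $ idx I j else 0)"
  have "\<forall>i\<in>I. (\<Sum>j\<in>I. M $$ (i,j) * f j) = 0"
  proof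
    fix i assume i: "i \<in> I"
    have "(\<Sum>j\<in>I. M $$ (i,j) * f j) = (\<Sum>k<card I. M $$ (pick I (idx I i), pick I k) * f (pick I k))"
      unfolding sum_pick[OF fin] pick_idx[OF i] ..
    also have "\<dots> = (\<Sum>k<card I. M $$ (pick I (idx I i), pick I k) * v $ k)"
      by (intro sum.cong refl) (simp add: f_def pick_in[OF fin] idx_pick[OF fin])
    also have "\<dots> = (submatrix M I I *\<^sub>v v) $ idx I i"
      using subm_mult[OF I v idx_lt[OF fin i]] by simp
    also have "\<dots> = 0" using z idx_lt[OF fin i] by simp
    finally show "(\<Sum>j\<in>I. M $$ (i,j) * f j) = 0" .
  qed
  hence fz: "\<forall>i\<in>I. f i = 0" using inj_core[OF I] by blast
  show ?thesis
  proof (rule eq_vecI)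
    fix k assume "k < dim_vec (0\<^sub>v (card I) :: real vec)"
    hence k: "k < card I" by simp
    have "f (pick I k) = 0" using fz pick_in[OF fin k] by blast
    thus "v $ k = 0\<^sub>v (card I) $ k" using k unfolding f_def by (simp add: pick_in[OF fin k] idx_pick[OF fin k])
  qed (use v in simp)
qed

lemma inv_exists: assumes I: "I \<subseteq> {..<d}"
  shows "\<exists>B. mat_inverse (submatrix M I I) = Some B \<and> submatrix M I I * B = 1\<^sub>m (card I)
     \<and> B * submatrix M I I = 1\<^sub>m (card I) \<and> B \<in> carrier_mat (card I) (card I)"
proof -
  note c = subm_carrier[OF I]
  have "det (submatrix M I I) \<noteq> 0"
  proof
    assume "det (submatrix M I I) = 0"
    then obtain v where "v \<in> carrier_vec (card I)" "v \<noteq> 0\<^sub>v (card I)" "submatrix M I I *\<^sub>v v = 0\<^sub>v (card I)"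
      using det_0_iff_vec_prod_zero_field[OF c] by blast
    thus False using subm_inj[OF I] by blast
  qed
  from det_non_zero_imp_unit[OF c this, of "()"]
  have "mat_inverse (submatrix M I I) \<noteq> None" using mat_inverse(1)[OF c, of "()"] by blast
  then obtain B where "mat_inverse (submatrix M I I) = Some B" by blast
  thus ?thesis using mat_inverse(2)[OF c] by blast
qed

lemma FP_exists: assumes I: "I \<subseteq> {..<d}" shows "\<exists>\<theta>. FP I \<theta>"
proof -
  have fin: "finite I" using I finite_subset by blast
  obtain B where B: "submatrix M I I * B = 1\<^sub>m (card I)" "B \<in> carrier_mat (card I) (card I)"
    using inv_exists[OF I] by blast
  note c = subm_carrier[OF I]
  define w where "w = B *\<^sub>v vec_restr r I"
  have rr: "vec_restr r I \<in> carrier_vec (card I)" using vec_restr_eq[OF I rdim] by simp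
  have w: "w \<in> carrier_vec (card I)" using B(2) rr unfolding w_def by simp
  have Aw: "submatrix M I I *\<^sub>v w = vec_restr r I"
    unfolding w_def using B c rr by (simp add: assoc_mult_mat_vec[symmetric])
  define \<theta> where "\<theta> = vec d (\<lambda>j. if j \<in> I then w $ idx I j else 0)"
  have tc: "\<theta> \<in> carrier_vec d" unfolding \<theta>_def by simp
  have tw: "vec_restr \<theta> I = w"
    unfolding vec_restr_eq[OF I tc]
  proof (rule eq_vecI)
    fix k assume "k < dim_vec w"
    hence k: "k < card I" using w by simp
    have "pick I k < d" using pick_in[OF fin k] I by auto
    thus "vec (card I) (\<lambda>k. \<theta> $ pick I k) $ k = w $ k"
      using k unfolding \<theta>_def by (simp add: pick_in[OF fin k] idx_pick[OF fin k])
  qed (use w in simp)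
  have eq: "\<forall>i\<in>I. (\<Sum>j\<in>I. M $$ (i,j) * \<theta> $ j) = r $ i"
  proof
    fix i assume i: "i \<in> I"
    have "(\<Sum>j\<in>I. M $$ (i,j) * \<theta> $ j) = (submatrix M I I *\<^sub>v vec_restr \<theta> I) $ idx I i"
      using subm_restr[OF I tc idx_lt[OF fin i]] pick_idx[OF i] by simp
    also have "\<dots> = vec_restr r I $ idx I i" using tw Aw by simp
    also have "\<dots> = r $ i" unfolding vec_restr_eq[OF I rdim] using idx_lt[OF fin i] pick_idx[OF i] by simp
    finally show "(\<Sum>j\<in>I. M $$ (i,j) * \<theta> $ j) = r $ i" .
  qed
  have pos: "\<forall>i\<in>I. \<theta> $ i > 0" using pos_core[OF I eq] by blast
  have off: "\<forall>j<d. j \<notin> I \<longrightarrow> \<theta> $ j = 0" unfolding \<theta>_def by simp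
  have "FP I \<theta>" unfolding FP_char[OF I] using tc off pos eq by blast
  thus ?thesis by blast
qed

lemma FP_formula: assumes I: "I \<subseteq> {..<d}" and fp: "FP I \<theta>"
  shows "vec_restr \<theta> I = the (mat_inverse (submatrix M I I)) *\<^sub>v vec_restr r I"
proof -
  have fin: "finite I" using I finite_subset by blast
  obtain B where B: "mat_inverse (submatrix M I I) = Some B" "B * submatrix M I I = 1\<^sub>m (card I)" "B \<in> carrier_mat (card I) (card I)"
    using inv_exists[OF I] by blast
  note c = subm_carrier[OF I]
  note h = fp[unfolded FP_char[OF I]]
  have tc: "\<theta> \<in> carrier_vec d" using h by blast
  have vt: "vec_restr \<theta> I \<in> carrier_vec (card I)" using vec_restr_eq[OF I tc] by simp
  have "submatrix M I I *\<^sub>v vec_restr \<theta> I = vec_restr r I"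
  proof (rule eq_vecI)
    fix a assume "a < dim_vec (vec_restr r I)"
    hence a: "a < card I" using vec_restr_eq[OF I rdim] by simp
    have "(submatrix M I I *\<^sub>v vec_restr \<theta> I) $ a = (\<Sum>j\<in>I. M $$ (pick I a, j) * \<theta> $ j)"
      by (rule subm_restr[OF I tc a])
    also have "\<dots> = r $ pick I a" using h pick_in[OF fin a] by blast
    finally show "(submatrix M I I *\<^sub>v vec_restr \<theta> I) $ a = vec_restr r I $ a"
      unfolding vec_restr_eq[OF I rdim] using a by simp
  qed (use c vec_restr_eq[OF I rdim] in simp)
  hence "B *\<^sub>v (submatrix M I I *\<^sub>v vec_restr \<theta> I) = B *\<^sub>v vec_restr r I" by simp
  moreover have "B *\<^sub>v (submatrix M I I *\<^sub>v vec_restr \<theta> I) = vec_restr \<theta> I"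
    using B c vt by (simp add: assoc_mult_mat_vec[symmetric])
  ultimately show ?thesis using B(1) by simp
qed

lemma main:
  shows "(\<forall>I \<subseteq> {0..<d}.
            invertible_mat (submatrix M I I) \<and>
            (\<exists>!\<theta>. is_fixed_point d M r \<theta> \<and> nonneg_vec d \<theta> \<and> supp_vec d \<theta> = I) \<and>
            (\<forall>\<theta>. is_fixed_point d M r \<theta> \<and> nonneg_vec d \<theta> \<and> supp_vec d \<theta> = I \<longrightarrow>
                 vec_restr \<theta> I = the (mat_inverse (submatrix M I I)) *\<^sub>v vec_restr r I \<and>
                 (\<forall>i<d. i \<notin> I \<longrightarrow> \<theta> $ i = 0)))
         \<and> card {\<theta>. is_fixed_point d M r \<theta> \<and> nonneg_vec d \<theta>} = 2 ^ d"
proof -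
 have part1: "\<forall>I \<subseteq> {0..<d}.
            invertible_mat (submatrix M I I) \<and>
            (\<exists>!\<theta>. is_fixed_point d M r \<theta> \<and> nonneg_vec d \<theta> \<and> supp_vec d \<theta> = I) \<and>
            (\<forall>\<theta>. is_fixed_point d M r \<theta> \<and> nonneg_vec d \<theta> \<and> supp_vec d \<theta> = I \<longrightarrow>
                 vec_restr \<theta> I = the (mat_inverse (submatrix M I I)) *\<^sub>v vec_restr r I \<and>
                 (\<forall>i<d. i \<notin> I \<longrightarrow> \<theta> $ i = 0))"
 proof (intro allI impI)
  fix I :: "nat set" assume I0: "I \<subseteq> {0..<d}"
  hence I: "I \<subseteq> {..<d}" by auto
  have inv: "invertible_mat (submatrix M I I)"
  proof -
    obtain B where B: "submatrix M I I * B = 1\<^sub>m (card I)" "B * submatrix M I I = 1\<^sub>m (card I)" "B \<in> carrier_mat (card I) (card I)"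
      using inv_exists[OF I] by blast
    have c: "submatrix M I I \<in> carrier_mat (card I) (card I)" by (rule subm_carrier[OF I])
    have dA: "dim_row (submatrix M I I) = card I" by (rule carrier_matD(1)[OF c])
    have dA2: "dim_col (submatrix M I I) = card I" by (rule carrier_matD(2)[OF c])
    have dB: "dim_row B = card I" by (rule carrier_matD(1)[OF B(3)])
    have sq: "square_mat (submatrix M I I)" unfolding square_mat.simps dA dA2 ..
    have i1: "inverts_mat (submatrix M I I) B" unfolding inverts_mat_def dA by (rule B(1))
    have i2: "inverts_mat B (submatrix M I I)" unfolding inverts_mat_def dB by (rule B(2))
    show ?thesis unfolding invertible_mat_def by (intro conjI sq exI[of _ B] i1 i2)
  qed
  have ex1: "\<exists>!\<theta>. is_fixed_point d M r \<theta> \<and> nonneg_vec d \<theta> \<and> supp_vec d \<theta> = I"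
  proof -
    obtain t where t: "FP I t" using FP_exists[OF I] by blast
    show ?thesis
    proof (rule ex1I[of _ t])
      show "is_fixed_point d M r t \<and> nonneg_vec d t \<and> supp_vec d t = I" using t unfolding FP_def .
      fix t' assume "is_fixed_point d M r t' \<and> nonneg_vec d t' \<and> supp_vec d t' = I"
      hence "FP I t'" unfolding FP_def .
      thus "t' = t" using FP_unique[OF I _ t] by blast
    qed
  qed
  have form: "\<forall>\<theta>. is_fixed_point d M r \<theta> \<and> nonneg_vec d \<theta> \<and> supp_vec d \<theta> = I \<longrightarrow>
                 vec_restr \<theta> I = the (mat_inverse (submatrix M I I)) *\<^sub>v vec_restr r I \<and>
                 (\<forall>i<d. i \<notin> I \<longrightarrow> \<theta> $ i = 0)"
  proof (intro allI impI)
    fix \<theta> assume "is_fixed_point d M r \<theta> \<and> nonneg_vec d \<theta> \<and> supp_vec d \<theta> = I"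
    hence fp: "FP I \<theta>" unfolding FP_def .
    have f1: "vec_restr \<theta> I = the (mat_inverse (submatrix M I I)) *\<^sub>v vec_restr r I"
      by (rule FP_formula[OF I fp])
    have f2: "\<forall>i<d. i \<notin> I \<longrightarrow> \<theta> $ i = 0" using fp[unfolded FP_char[OF I]] by blast
    show "vec_restr \<theta> I = the (mat_inverse (submatrix M I I)) *\<^sub>v vec_restr r I \<and>
                 (\<forall>i<d. i \<notin> I \<longrightarrow> \<theta> $ i = 0)" using f1 f2 by (rule conjI)
  qed
  show "invertible_mat (submatrix M I I) \<and>
            (\<exists>!\<theta>. is_fixed_point d M r \<theta> \<and> nonneg_vec d \<theta> \<and> supp_vec d \<theta> = I) \<and>
            (\<forall>\<theta>. is_fixed_point d M r \<theta> \<and> nonneg_vec d \<theta> \<and> supp_vec d \<theta> = I \<longrightarrow>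
                 vec_restr \<theta> I = the (mat_inverse (submatrix M I I)) *\<^sub>v vec_restr r I \<and>
                 (\<forall>i<d. i \<notin> I \<longrightarrow> \<theta> $ i = 0))"
    using inv ex1 form by (intro conjI)
 qed
  let ?S = "{\<theta>. is_fixed_point d M r \<theta> \<and> nonneg_vec d \<theta>}"
  have "bij_betw (supp_vec d) ?S (Pow {0..<d})"
  proof (rule bij_betwI')
    fix a b assume "a \<in> ?S" "b \<in> ?S"
    show "(supp_vec d a = supp_vec d b) = (a = b)"
    proof
      assume e: "supp_vec d a = supp_vec d b"
      have I: "supp_vec d a \<subseteq> {..<d}" unfolding supp_vec_def by auto
      have fa: "FP (supp_vec d a) a" using \<open>a \<in> ?S\<close> unfolding FP_def by simp
      have fb: "FP (supp_vec d a) b" using \<open>b \<in> ?S\<close> e unfolding FP_def by simp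
      show "a = b" by (rule FP_unique[OF I fa fb])
    qed simp
  next
    fix a assume "a \<in> ?S" thus "supp_vec d a \<in> Pow {0..<d}" unfolding supp_vec_def by auto
  next
    fix I assume "I \<in> Pow {0..<d}"
    hence I: "I \<subseteq> {..<d}" by auto
    obtain \<theta> where "FP I \<theta>" using FP_exists[OF I] by blast
    hence "\<theta> \<in> ?S" "I = supp_vec d \<theta>" unfolding FP_def by simp_all
    thus "\<exists>\<theta>\<in>?S. I = supp_vec d \<theta>" by blast
  qed
  hence "card ?S = card (Pow {0..<d::nat})" by (rule bij_betw_same_card)
  hence part2: "card ?S = 2 ^ d" by (simp add: card_Pow)
  show ?thesis using part1 part2 by (rule conjI)
qed

end

theorem proposition2:
  fixes X :: "real mat" and y :: "real vec" and n d :: nat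
    and M :: "real mat" and r :: "real vec"
  assumes X: "X \<in> carrier_mat n d" and y: "y \<in> carrier_vec n"
    and M_def: "M = transpose_mat X * X" and r_def: "r = transpose_mat X *\<^sub>v y"
    and A1: "\<forall>i<d. r $ i > 0"
    and A2: "\<forall>i<d. \<forall>j<d. i \<noteq> j \<longrightarrow> M $$ (i, j) \<le> 0"
  shows "(\<forall>I \<subseteq> {0..<d}.
            invertible_mat (submatrix M I I) \<and>
            (\<exists>!\<theta>. is_fixed_point d M r \<theta> \<and> nonneg_vec d \<theta> \<and> supp_vec d \<theta> = I) \<and>
            (\<forall>\<theta>. is_fixed_point d M r \<theta> \<and> nonneg_vec d \<theta> \<and> supp_vec d \<theta> = I \<longrightarrow>
                 vec_restr \<theta> I = the (mat_inverse (submatrix M I I)) *\<^sub>v vec_restr r I \<and>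
                 (\<forall>i<d. i \<notin> I \<longrightarrow> \<theta> $ i = 0)))
         \<and> card {\<theta>. is_fixed_point d M r \<theta> \<and> nonneg_vec d \<theta>} = 2 ^ d"
proof -
  interpret setting X y n d M r using assms by unfold_locales
  show ?thesis by (rule main)
qed

end
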